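(* Let $X$ be a real topological vector space and let $f:X\times X\to\mathbb{R}$ be a bifunction such that for each $x\in X$ the function $-f(x,\cdot)$ is semi-strictly quasi-convex, and $f(x,x)=0$ for all $x\in X$. If $f$ has the star finite intersection property (fip$^*$) on $X$, then $f$ is quasi-monotone on $X$.
   Context: A function $h:X\to\mathbb{R}\cup\{+\infty\}$ is quasi-convex if every sublevel set $\{x\in X: h(x)\leq\lambda\}$, $\lambda\in\mathbb{R}$, is convex; it is semi-strictly quasi-convex if it is quasi-convex and for all $x,y\in X$ with $h(x)\neq h(y)$ one has $h(tx+(1-t)y)<\max\{h(x),h(y)\}$ for all $t\in\,]0,1[$. The bifunction $f$ has the fip$^*$ on a convex set $C$ if for every finite non-empty subset $A$ of $C$ there exists $x\in\operatorname{co}(A)$ with $\max_{a\in A}f(a,x)\leq 0$. The bifunction $f$ is quasi-monotone on $C$ if for all $x,y\in C$, $f(x,y)>0$ implies $f(y,x)\leq 0$. *)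

theory Defs
  imports "HOL-Analysis.Analysis"
begin

definition quasi_convex_on :: "'a::real_vector set \<Rightarrow> ('a \<Rightarrow> real) \<Rightarrow> bool" where
  "quasi_convex_on C h \<longleftrightarrow> (\<forall>c::real. convex {x \<in> C. h x \<le> c})"

definition semistrictly_quasi_convex_on :: "'a::real_vector set \<Rightarrow> ('a \<Rightarrow> real) \<Rightarrow> bool" where
  "semistrictly_quasi_convex_on C h \<longleftrightarrow> quasi_convex_on C h \<and>
     (\<forall>x\<in>C. \<forall>y\<in>C. h x \<noteq> h y \<longrightarrow>
        (\<forall>t::real. 0 < t \<and> t < 1 \<longrightarrow> h (t *\<^sub>R x + (1 - t) *\<^sub>R y) < max (h x) (h y)))"

definition fip_star :: "('a::real_vector \<Rightarrow> 'a \<Rightarrow> real) \<Rightarrow> 'a set \<Rightarrow> bool" where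
  "fip_star f C \<longleftrightarrow> (\<forall>A. finite A \<and> A \<noteq> {} \<and> A \<subseteq> C \<longrightarrow>
      (\<exists>x \<in> convex hull A. Max ((\<lambda>a. f a x) ` A) \<le> 0))"

definition quasi_monotone_on :: "('a \<Rightarrow> 'a \<Rightarrow> real) \<Rightarrow> 'a set \<Rightarrow> bool" where
  "quasi_monotone_on f C \<longleftrightarrow> (\<forall>x\<in>C. \<forall>y\<in>C. f x y > 0 \<longrightarrow> f y x \<le> 0)"

end

theory Submission
  imports Defs
begin

theorem proposition3p2:
  fixes f :: "'a::{real_vector, topological_space} \<Rightarrow> 'a \<Rightarrow> real"
  assumes "\<And>x. semistrictly_quasi_convex_on UNIV (\<lambda>y. - f x y)"
    and "\<And>x. f x x = 0"
    and "fip_star f UNIV"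
  shows "quasi_monotone_on f UNIV"
  unfolding quasi_monotone_on_def
proof (intro ballI impI)
  fix x y assume p: "f x y > 0"
  show "f y x \<le> 0"
  proof (rule ccontr)
  assume n: "\<not> f y x \<le> 0"
  have "\<exists>z \<in> convex hull {x,y}. Max ((\<lambda>a. f a z) ` {x,y}) \<le> 0"
  proof -
    have h: "\<forall>A. finite A \<and> A \<noteq> {} \<and> A \<subseteq> (UNIV::'a set) \<longrightarrow>
      (\<exists>x \<in> convex hull A. Max ((\<lambda>a. f a x) ` A) \<le> 0)"
      using assms(3) unfolding fip_star_def .
    have c: "finite {x,y} \<and> {x,y} \<noteq> {} \<and> {x,y} \<subseteq> (UNIV::'a set)" by auto
    show ?thesis using mp[OF spec[OF h, of "{x,y}"] c] .
  qed
  then obtain z where z: "z \<in> convex hull {x,y}" and m: "Max ((\<lambda>a. f a z) ` {x,y}) \<le> 0"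
    by blast
  have fx: "f x z \<le> 0" and fy: "f y z \<le> 0" using m by auto
  from z obtain u v where uv: "0 \<le> u" "0 \<le> v" "u + v = 1" and zz: "z = u *\<^sub>R x + v *\<^sub>R y"
    unfolding convex_hull_2 by blast
  have v: "v = 1 - u" using uv(3) by linarith
  have zz2: "z = u *\<^sub>R x + (1 - u) *\<^sub>R y" using zz v by blast
  show False
  proof (cases "u = 0")
    case True
    then have "z = y" using zz2 by simp
    then show ?thesis using fx p by simp
  next
    case u0: False
    show ?thesis
    proof (cases "u = 1")
      case True
      then have "z = x" using zz2 by simp
      then show ?thesis using fy n by simp
    next
      case False
      have t: "0 < u \<and> u < 1" using u0 False uv by auto
      have ne: "- f x x \<noteq> - f x y" using assms(2)[of x] p by simp
      have ss: "\<forall>a\<in>UNIV. \<forall>b\<in>UNIV. - f x a \<noteq> - f x b \<longrightarrow>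
        (\<forall>t::real. 0 < t \<and> t < 1 \<longrightarrow> - f x (t *\<^sub>R a + (1 - t) *\<^sub>R b) < max (- f x a) (- f x b))"
        using assms(1)[of x] unfolding semistrictly_quasi_convex_on_def by blast
      have "- f x (u *\<^sub>R x + (1 - u) *\<^sub>R y) < max (- f x x) (- f x y)"
        using ss ne t by blast
      then have "- f x z < max (- f x x) (- f x y)" using zz2 by simp
      moreover have "max (- f x x) (- f x y) = 0" using assms(2)[of x] p by simp
      ultimately show ?thesis using fx by simp
    qed
  qed
  qed
qed

end
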